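(* Let $M$ be a matroid with set of bases $\mathcal{B}(M)$, and let $<$ be a total order of $\mathcal{B}(M)$. If the induced order $<_\bullet$ of the facets of the dual matroid polytope $P_M^*$ is a shelling order of $P_M^*$, then $<$ is a shelling order of the independence complex $\mathcal{I}(M)$.
   Context: A matroid $M$ on a finite ground set $E$ has independence complex $\mathcal{I}(M)$ (the simplicial complex of independent sets), whose facets are the bases $\mathcal{B}(M)$. For $S\subseteq E$, $\chi_S\in\mathbb{R}^E$ denotes the characteristic vector of $S$. The matroid polytope is $P_M=\mathrm{conv}\{\chi_B : B\in\mathcal{B}(M)\}\subset\mathbb{R}^E$; its vertices are exactly the $\chi_B$. The dual polytope $P_M^*$ is a polytope whose face lattice is the opposite of that of $P_M$; so its facets $F_B$ are in natural bijection with bases $B$ (the facet $F_B$ corresponding to the vertex $\chi_B$). For an order $<$ on $\mathcal{B}(M)$, $<_\bullet$ is the order on facets of $P_M^*$ given by $F_B<_\bullet F_{B'}$ iff $B<B'$. A shelling order of a pure simplicial complex is a total order $F_1<\dots<F_k$ of its facets such that for each $j\ge 2$, the complex $\langle F_1,\dots,F_{j-1}\rangle\cap\langle F_j\rangle$ is pure of dimension one less than the complex (here $\langle\mathcal{G}\rangle$ is the complex generated by $\mathcal{G}$). A shelling of a polygon is an ordering of its edges such that every edge after the first shares a vertex with an earlier edge; a shelling of a polytope of dimension $\ge 3$ is an order $F_1,\dots,F_k$ of its facets such that for each $j\ge2$, $F_j\cap\bigcup_{i<j}F_i$ is a union of facets of $F_j$ forming an initial segment of some shelling order of $F_j$. 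*)

theory Defs
  imports "HOL-Analysis.Analysis"
begin

section \<open>Matroids (via independent sets) on the finite ground set UNIV of a finite type\<close>

definition matroid :: "('e::finite set \<Rightarrow> bool) \<Rightarrow> bool" where
  "matroid indep \<longleftrightarrow>
     indep {} \<and>
     (\<forall>I J. indep J \<and> I \<subseteq> J \<longrightarrow> indep I) \<and>
     (\<forall>I J. indep I \<and> indep J \<and> card I < card J \<longrightarrow> (\<exists>x\<in>J - I. indep (insert x I)))"

definition matroid_bases :: "('e::finite set \<Rightarrow> bool) \<Rightarrow> 'e set set" where
  "matroid_bases indep = {B. indep B \<and> (\<forall>I. indep I \<and> B \<subseteq> I \<longrightarrow> I = B)}"

definition indep_complex :: "('e::finite set \<Rightarrow> bool) \<Rightarrow> 'e set set" where
  "indep_complex indep = {I. indep I}"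

definition charvec :: "'e::finite set \<Rightarrow> real ^ 'e" where
  "charvec S = (\<chi> i. if i \<in> S then 1 else 0)"

definition matroid_polytope :: "('e::finite set \<Rightarrow> bool) \<Rightarrow> (real ^ 'e) set" where
  "matroid_polytope indep = convex hull (charvec ` matroid_bases indep)"

definition complex_generated :: "'a set set \<Rightarrow> 'a set set" where
  "complex_generated Fs = {S. \<exists>F\<in>Fs. S \<subseteq> F}"

definition simplicial_facets :: "'a set set \<Rightarrow> 'a set set" where
  "simplicial_facets K = {F\<in>K. \<forall>G\<in>K. F \<subseteq> G \<longrightarrow> G = F}"

text \<open>A complex of finite sets is pure of dimension n-1 iff all its faces have at most n
  elements and every face lies in a face with exactly n elements.\<close>
definition pure_card :: "'a set set \<Rightarrow> nat \<Rightarrow> bool" where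
  "pure_card K n \<longleftrightarrow> (\<forall>S\<in>K. card S \<le> n) \<and> (\<forall>S\<in>K. \<exists>T\<in>K. S \<subseteq> T \<and> card T = n)"

text \<open>Shelling order of a (pure, finite) simplicial complex K, given as a list of its facets.
  The dimension of K is Max (card ` K) - 1, so "one less" means faces of size Max(card ` K) - 1.\<close>
definition simplicial_shelling :: "'a set set \<Rightarrow> 'a set list \<Rightarrow> bool" where
  "simplicial_shelling K L \<longleftrightarrow>
     distinct L \<and> set L = simplicial_facets K \<and>
     (\<forall>j. 0 < j \<and> j < length L \<longrightarrow>
        pure_card (complex_generated (set (take j L)) \<inter> complex_generated {L ! j})
                  (Max (card ` K) - 1))"

section \<open>Shellings of the dual polytope, described via the (reversed) face lattice of P\<close>

text \<open>The face of the dual polytope P* dual to a face G of P is encoded by G itself.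
  Its faces are encoded by the faces of P containing G; its facets by the faces of P
  covering G. Its dimension is aff_dim P - 1 - aff_dim G.  A point-set union of faces of P*
  is encoded by the set of faces of P* it contains (the generated subcomplex).\<close>

definition dual_below :: "('a::euclidean_space) set \<Rightarrow> 'a set \<Rightarrow> 'a set set" where
  "dual_below P G = {H. H face_of P \<and> G \<subseteq> H}"

definition dual_facets :: "('a::euclidean_space) set \<Rightarrow> 'a set \<Rightarrow> 'a set set" where
  "dual_facets P G = {H. H face_of P \<and> G \<subset> H \<and> \<not> (\<exists>K. K face_of P \<and> G \<subset> K \<and> K \<subset> H)}"

definition dual_vertex :: "('a::euclidean_space) set \<Rightarrow> 'a set \<Rightarrow> bool" where
  "dual_vertex P V \<longleftrightarrow> V face_of P \<and> aff_dim V = aff_dim P - 1"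

definition dual_facet_list :: "('a::euclidean_space) set \<Rightarrow> 'a set \<Rightarrow> 'a set list \<Rightarrow> bool" where
  "dual_facet_list P G L \<longleftrightarrow> distinct L \<and> set L = dual_facets P G"

text \<open>dual_shelling d P G L: L is a shelling order of the d-dimensional face of P* dual to G.
  Dimension at most 1: any ordering of the facets; dimension 2 (polygon): every edge after
  the first shares a vertex with an earlier edge; dimension at least 3: recursive condition
  (nonempty initial segment of a shelling of the facet).\<close>
fun dual_shelling :: "nat \<Rightarrow> ('a::euclidean_space) set \<Rightarrow> 'a set \<Rightarrow> 'a set list \<Rightarrow> bool" where
  "dual_shelling 0 P G L = dual_facet_list P G L"
| "dual_shelling (Suc 0) P G L = dual_facet_list P G L"
| "dual_shelling (Suc (Suc 0)) P G L =
     (dual_facet_list P G L \<and>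
      (\<forall>j. 0 < j \<and> j < length L \<longrightarrow>
         (\<exists>i<j. \<exists>V. dual_vertex P V \<and> V \<in> dual_below P (L ! j) \<and> V \<in> dual_below P (L ! i))))"
| "dual_shelling (Suc (Suc (Suc n))) P G L =
     (dual_facet_list P G L \<and>
      (\<forall>j. 0 < j \<and> j < length L \<longrightarrow>
         (\<exists>L' r. dual_shelling (Suc (Suc n)) P (L ! j) L' \<and> 1 \<le> r \<and> r \<le> length L' \<and>
            dual_below P (L ! j) \<inter> (\<Union>i<j. dual_below P (L ! i)) =
            (\<Union>k<r. dual_below P (L' ! k)))))"

end

theory Submission
  imports Defs
begin

lemma mat_sub: "matroid indep \<Longrightarrow> indep J \<Longrightarrow> I \<subseteq> J \<Longrightarrow> indep I"
  unfolding matroid_def by blast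

lemma mat_aug: "matroid indep \<Longrightarrow> indep I \<Longrightarrow> indep J \<Longrightarrow> card I < card J \<Longrightarrow> \<exists>x\<in>J - I. indep (insert x I)"
  unfolding matroid_def by blast

lemma basis_indep: "B \<in> matroid_bases indep \<Longrightarrow> indep B"
  unfolding matroid_bases_def by blast

lemma indep_card_le:
  fixes indep :: "'e::finite set \<Rightarrow> bool"
  assumes m: "matroid indep" and B: "B \<in> matroid_bases indep" and I: "indep I"
  shows "card I \<le> card B"
proof (rule ccontr)
  assume "\<not> card I \<le> card B"
  then obtain x where x: "x \<in> I - B" "indep (insert x B)"
    using mat_aug[OF m basis_indep[OF B] I] by auto
  then have "insert x B = B" using B unfolding matroid_bases_def by blast
  with x show False by blast
qed

lemma bases_card:
  fixes indep :: "'e::finite set \<Rightarrow> bool"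
  assumes m: "matroid indep" and "A \<in> matroid_bases indep" "B \<in> matroid_bases indep"
  shows "card A = card B"
  using indep_card_le[OF m] basis_indep assms by (metis le_antisym)

lemma indep_card_basis:
  fixes indep :: "'e::finite set \<Rightarrow> bool"
  assumes m: "matroid indep" and B: "B \<in> matroid_bases indep" and I: "indep I"
    and c: "card B \<le> card I"
  shows "I \<in> matroid_bases indep"
  unfolding matroid_bases_def mem_Collect_eq
proof (intro conjI allI impI)
  show "indep I" by fact
  fix J assume J: "indep J \<and> I \<subseteq> J"
  then have J: "indep J" "I \<subseteq> J" by auto
  show "J = I"
  proof (rule ccontr)
    assume "J \<noteq> I"
    then have "card I < card J" using J by (intro psubset_card_mono) auto
    then show False using indep_card_le[OF m B J(1)] c by linarith
  qed
qed

lemma bases_exist: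
  fixes indep :: "'e::finite set \<Rightarrow> bool"
  assumes m: "matroid indep"
  shows "\<exists>B. B \<in> matroid_bases indep"
proof -
  define n where "n = Max (card ` {I. indep I})"
  have fin: "finite (card ` {I. indep I})" by simp
  have "indep {}" using m unfolding matroid_def by blast
  then have ne: "card ` {I. indep I} \<noteq> {}" by blast
  obtain B where B: "indep B" "card B = n" using Max_in[OF fin ne] unfolding n_def by auto
  have "B \<in> matroid_bases indep"
    unfolding matroid_bases_def mem_Collect_eq
  proof (intro conjI allI impI)
    fix J assume J: "indep J \<and> B \<subseteq> J"
    then have J: "indep J" "B \<subseteq> J" by auto
    have "card J \<le> n" unfolding n_def using J fin by (simp add: Max_ge)
    then show "J = B" using card_seteq[of J B] J B by auto
  qed (fact B)
  then show ?thesis by blast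
qed

lemma exch:
  fixes indep :: "'e::finite set \<Rightarrow> bool"
  assumes m: "matroid indep" and A: "A \<in> matroid_bases indep" and B: "B \<in> matroid_bases indep"
    and a: "a \<in> A - B"
  shows "\<exists>b\<in>B - A. insert b (A - {a}) \<in> matroid_bases indep"
proof -
  have i: "indep (A - {a})" using mat_sub[OF m basis_indep[OF A]] by blast
  have "card (A - {a}) < card B" using a bases_card[OF m A B]
    by (metis Diff_iff card_Diff1_less finite)
  then obtain x where x: "x \<in> B - (A - {a})" "indep (insert x (A - {a}))"
    using mat_aug[OF m i basis_indep[OF B]] by blast
  have xa: "x \<noteq> a" using x a by blast
  have "card (insert x (A - {a})) = card A" using x xa a
    by (simp add: card_Diff_singleton_if) (metis DiffD1 One_nat_def card.remove finite Suc_pred card_gt_0_iff emptyE)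
  then have "insert x (A - {a}) \<in> matroid_bases indep"
    using indep_card_basis[OF m A x(2)] by simp
  moreover have "x \<in> B - A" using x xa by blast
  ultimately show ?thesis by blast
qed

lemma card_diff_pos:
  fixes A B :: "'e::finite set"
  assumes "card A = card B" "A \<noteq> B"
  shows "card (A - B) \<ge> 1"
proof -
  have "A - B \<noteq> {}"
  proof
    assume "A - B = {}"
    then have "A \<subseteq> B" by blast
    then have "A = B" using assms card_subset_eq by (metis finite)
    with assms show False by simp
  qed
  then show ?thesis by (simp add: Suc_le_eq card_gt_0_iff)
qed

lemma sum_exch:
  fixes w :: "'e::finite \<Rightarrow> real"
  assumes "a \<in> A" "b \<notin> A"
  shows "sum w (insert b (A - {a})) = sum w A - w a + w b"
proof -
  have "sum w (insert b (A - {a})) = w b + sum w (A - {a})" using assms by simp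
  also have "sum w (A - {a}) = sum w A - w a" using assms by (simp add: sum_diff1)
  finally show ?thesis by simp
qed

lemma nbr:
  fixes indep :: "'e::finite set \<Rightarrow> bool" and w :: "'e \<Rightarrow> real"
  assumes m: "matroid indep" and le: "\<And>B. B \<in> matroid_bases indep \<Longrightarrow> sum w B \<le> M"
    and A: "A \<in> matroid_bases indep" "sum w A = M"
  shows "B' \<in> matroid_bases indep \<Longrightarrow> sum w B' = M \<Longrightarrow> A \<noteq> B' \<Longrightarrow>
     \<exists>C\<in>matroid_bases indep. sum w C = M \<and> card (A - C) = 1"
proof (induction "card (A - B')" arbitrary: B' rule: less_induct)
  case less
  have cAB: "card A = card B'" using bases_card[OF m A(1) less(2)] .
  show ?case
  proof (cases "card (A - B') = 1")
    case True then show ?thesis using less by blast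
  next
    case False
    then have n2: "card (A - B') \<ge> 2" using card_diff_pos[OF cAB less(4)] by linarith
    define D where "D = (A - B') \<union> (B' - A)"
    have Dne: "D \<noteq> {}" using n2 unfolding D_def by auto
    obtain e where e: "e \<in> D" "\<And>x. x \<in> D \<Longrightarrow> w e \<le> w x"
      using Dne finite[of D] by (metis arg_min_if_finite(1) arg_min_least not_le)
    show ?thesis
    proof (cases "e \<in> A - B'")
      case True
      obtain b where b: "b \<in> B' - A" "insert b (A - {e}) \<in> matroid_bases indep"
        using exch[OF m A(1) less(2) True] by blast
      show ?thesis
      proof (cases "sum w (insert b (A - {e})) = M")
        case True
        have "A - insert b (A - {e}) = {e}" using b \<open>e \<in> A - B'\<close> by auto
        then show ?thesis using True b by (intro bexI[of _ "insert b (A - {e})"]) auto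
      next
        case False
        then have "sum w (insert b (A - {e})) < M" using le[OF b(2)] by simp
        then have "w b < w e" using sum_exch[of e A b w] b \<open>e \<in> A - B'\<close> A(2) by simp
        moreover have "b \<in> D" using b unfolding D_def by blast
        ultimately show ?thesis using e(2) by fastforce
      qed
    next
      case False
      then have eB: "e \<in> B' - A" using e(1) unfolding D_def by blast
      obtain a where a: "a \<in> A - B'" "insert a (B' - {e}) \<in> matroid_bases indep"
        using exch[OF m less(2) A(1) eB] by blast
      show ?thesis
      proof (cases "sum w (insert a (B' - {e})) = M")
        case True
        have eq: "A - insert a (B' - {e}) = (A - B') - {a}" using a eB by auto
        have lt: "card (A - insert a (B' - {e})) < card (A - B')"
          unfolding eq using a(1) n2 by (simp add: card_Diff_singleton)
        have ge: "card (A - insert a (B' - {e})) \<ge> 1"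
          unfolding eq using a(1) n2 by (simp add: card_Diff_singleton)
        have "A \<noteq> insert a (B' - {e})" using ge by auto
        then show ?thesis using less(1)[OF lt a(2) True] by blast
      next
        case False
        then have "sum w (insert a (B' - {e})) < M" using le[OF a(2)] by simp
        then have "w a < w e" using sum_exch[of e B' a w] a eB less(3) by simp
        moreover have "a \<in> D" using a unfolding D_def by blast
        ultimately show ?thesis using e(2) by fastforce
      qed
    qed
  qed
qed

lemma charvec_inner: "c \<bullet> charvec B = sum (\<lambda>i. c $ i) B"
  unfolding charvec_def inner_vec_def
  by (simp add: if_distrib sum.If_cases Int_absorb1 cong: if_cong)

lemma charvec_inj: "charvec A = charvec B \<Longrightarrow> A = B"
proof -
  assume h: "charvec A = charvec B"
  have "\<And>i. (i \<in> A) = (i \<in> B)"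
  proof -
    fix i
    have "charvec A $ i = charvec B $ i" using h by simp
    then show "(i \<in> A) = (i \<in> B)" unfolding charvec_def by (auto split: if_splits)
  qed
  then show ?thesis by blast
qed

lemma charvec_in_P: "B \<in> matroid_bases indep \<Longrightarrow> charvec B \<in> matroid_polytope indep"
  unfolding matroid_polytope_def by (simp add: hull_inc)

lemma convex_P: "convex (matroid_polytope indep)"
  unfolding matroid_polytope_def by (simp add: convex_convex_hull)

lemma polyhedron_P: "polyhedron (matroid_polytope (indep :: 'e::finite set \<Rightarrow> bool))"
  unfolding matroid_polytope_def
  by (intro polytope_imp_polyhedron polytope_convex_hull) simp

lemma P_le:
  assumes "\<And>B. B \<in> matroid_bases indep \<Longrightarrow> c \<bullet> charvec B \<le> M" "x \<in> matroid_polytope indep"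
  shows "c \<bullet> x \<le> M"
proof -
  have "matroid_polytope indep \<subseteq> {x. c \<bullet> x \<le> M}"
    unfolding matroid_polytope_def
    by (rule hull_minimal) (use assms(1) convex_halfspace_le in auto)
  then show ?thesis using assms(2) by blast
qed

definition FT :: "('e::finite set \<Rightarrow> bool) \<Rightarrow> 'e set \<Rightarrow> (real ^ 'e) set" where
  "FT indep T = matroid_polytope indep \<inter> {x. charvec T \<bullet> x = real (card T)}"

lemma FT_face: "FT indep T face_of matroid_polytope indep"
  unfolding FT_def
proof (rule face_of_Int_supporting_hyperplane_le[OF convex_P])
  fix x assume "x \<in> matroid_polytope indep"
  then show "charvec T \<bullet> x \<le> real (card T)"
  proof (rule P_le[rotated])
    fix B
    have "charvec T \<bullet> charvec B = real (card (B \<inter> T))"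
      by (simp only: charvec_inner) (simp add: charvec_def sum.If_cases)
    also have "\<dots> \<le> real (card T)" by (simp add: card_mono)
    finally show "charvec T \<bullet> charvec B \<le> real (card T)" .
  qed
qed

lemma FT_mem: "B \<in> matroid_bases indep \<Longrightarrow> (charvec B \<in> FT indep T) = (T \<subseteq> B)"
proof -
  assume B: "B \<in> matroid_bases indep"
  have "charvec T \<bullet> charvec B = real (card (B \<inter> T))"
    by (simp only: charvec_inner) (simp add: charvec_def sum.If_cases)
  moreover have "(card (B \<inter> T) = card T) = (T \<subseteq> B)"
    by (metis Int_lower2 card_subset_eq finite inf.absorb_iff2)
  ultimately show ?thesis unfolding FT_def using charvec_in_P[OF B] by auto
qed

lemma edge:
  fixes indep :: "'e::finite set \<Rightarrow> bool"
  assumes m: "matroid indep" and E: "E face_of matroid_polytope indep"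
    and B: "B \<in> matroid_bases indep" and B': "B' \<in> matroid_bases indep" and ne: "B \<noteq> B'"
    and BE: "charvec B \<in> E" and B'E: "charvec B' \<in> E"
    and cov: "\<And>K. K face_of matroid_polytope indep \<Longrightarrow> {charvec B} \<subset> K \<Longrightarrow> K \<subseteq> E \<Longrightarrow> K = E"
  shows "card (B - B') = 1"
proof -
  have "E exposed_face_of matroid_polytope indep"
    using E exposed_face_of_polyhedron[OF polyhedron_P] by blast
  then obtain c M where cM: "matroid_polytope indep \<subseteq> {x. c \<bullet> x \<le> M}"
    "E = matroid_polytope indep \<inter> {x. c \<bullet> x = M}"
    unfolding exposed_face_of_def by blast
  define w where "w i = c $ i" for i
  have le: "sum w X \<le> M" if "X \<in> matroid_bases indep" for X
    using cM(1) charvec_in_P[OF that] charvec_inner[of c X] unfolding w_def by auto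
  have eqE: "(charvec X \<in> E) = (sum w X = M)" if "X \<in> matroid_bases indep" for X
    using cM(2) charvec_in_P[OF that] charvec_inner[of c X] unfolding w_def by auto
  have sB: "sum w B = M" using eqE[OF B] BE by simp
  have sB': "sum w B' = M" using eqE[OF B'] B'E by simp
  obtain C where C: "C \<in> matroid_bases indep" "sum w C = M" "card (B - C) = 1"
    using nbr[OF m le B sB B' sB' ne] by blast
  define K where "K = E \<inter> FT indep (B \<inter> C)"
  have Kf: "K face_of matroid_polytope indep" unfolding K_def by (rule face_of_Int[OF E FT_face])
  have "C \<noteq> B" using C(3) by auto
  then have cne: "charvec C \<noteq> charvec B" using charvec_inj by metis
  have "charvec B \<in> K" unfolding K_def using BE FT_mem[OF B] by auto
  moreover have "charvec C \<in> K" unfolding K_def using C eqE[OF C(1)] FT_mem[OF C(1)] by auto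
  ultimately have "{charvec B} \<subset> K" using cne by blast
  moreover have "K \<subseteq> E" unfolding K_def by blast
  ultimately have KE: "K = E" by (rule cov[OF Kf])
  have "charvec B' \<in> K" using B'E KE by simp
  then have "charvec B' \<in> FT indep (B \<inter> C)" unfolding K_def by simp
  then have "B \<inter> C \<subseteq> B'" using FT_mem[OF B', of "B \<inter> C"] by simp
  then have "B - B' \<subseteq> B - C" by auto
  then have "card (B - B') \<le> card (B - C)" by (intro card_mono) auto
  then have "card (B - B') \<le> 1" using C(3) by simp
  moreover have "card (B - B') \<ge> 1" using card_diff_pos[OF bases_card[OF m B B'] ne] .
  ultimately show ?thesis by simp
qed

lemma cov_dim:
  fixes indep :: "'e::finite set \<Rightarrow> bool"
  assumes E: "E face_of matroid_polytope indep" and d: "aff_dim E \<le> 1"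
    and K: "K face_of matroid_polytope indep" "{v} \<subset> K" "K \<subseteq> E"
  shows "K = E"
proof (rule ccontr)
  assume "K \<noteq> E"
  moreover have "K face_of E" using face_of_subset[OF K(1) K(3) face_of_imp_subset[OF E]] .
  ultimately have "aff_dim K < aff_dim E" using face_of_aff_dim_lt[OF face_of_imp_convex[OF E]] by simp
  then have "aff_dim K < 0 \<or> aff_dim K = 0" using d by linarith
  then have "K = {} \<or> (\<exists>a. K = {a})" using aff_dim_eq_0[of K] aff_dim_negative_iff[of K] by simp
  then show False using K(2) by force
qed

lemma ds_list: "dual_shelling n P G L \<Longrightarrow> dual_facet_list P G L"
  by (induction n P G L rule: dual_shelling.induct) auto

lemma key:
  fixes indep :: "'e::finite set \<Rightarrow> bool" and Bs :: "'e set list"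
  assumes m: "matroid indep"
    and dist: "distinct Bs" and setB: "set Bs = matroid_bases indep"
    and ds: "dual_shelling (nat (aff_dim (matroid_polytope indep))) (matroid_polytope indep) {}
           (map (\<lambda>B. {charvec B}) Bs)"
    and ij: "i < j" "j < length Bs"
  shows "\<exists>m<j. Bs ! i \<inter> Bs ! j \<subseteq> Bs ! m \<and> card (Bs ! j - Bs ! m) = 1"
proof -
  let ?P = "matroid_polytope indep"
  let ?L = "map (\<lambda>B. {charvec B}) Bs"
  have bas: "Bs ! k \<in> matroid_bases indep" if "k < length Bs" for k
    using setB nth_mem[OF that] by blast
  have Lk: "?L ! k = {charvec (Bs ! k)}" if "k < length Bs" for k using that by simp
  have neq: "Bs ! k \<noteq> Bs ! l" if "k < length Bs" "l < length Bs" "k \<noteq> l" for k l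
    using dist that nth_eq_iff_index_eq by blast
  have Bi: "Bs ! i \<in> matroid_bases indep" and Bj: "Bs ! j \<in> matroid_bases indep"
    using ij bas by auto
  have ij': "Bs ! j \<noteq> Bs ! i" using neq ij by simp
  define H where "H = FT indep (Bs ! i \<inter> Bs ! j)"
  have Hf: "H face_of ?P" unfolding H_def by (rule FT_face)
  have viH: "charvec (Bs ! i) \<in> H" unfolding H_def using FT_mem[OF Bi] by blast
  have vjH: "charvec (Bs ! j) \<in> H" unfolding H_def using FT_mem[OF Bj] by blast
  have cvx: "convex ?P" by (rule convex_P)
  consider "nat (aff_dim ?P) \<le> 1" | "nat (aff_dim ?P) = 2" | n where "nat (aff_dim ?P) = Suc (Suc (Suc n))"
  proof -
    assume c1: "nat (aff_dim ?P) \<le> 1 \<Longrightarrow> thesis" and c2: "nat (aff_dim ?P) = 2 \<Longrightarrow> thesis"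
      and c3: "\<And>n. nat (aff_dim ?P) = Suc (Suc (Suc n)) \<Longrightarrow> thesis"
    show thesis
    proof (cases "nat (aff_dim ?P) \<le> 2")
      case True
      then show thesis using c1 c2 by linarith
    next
      case False
      then have "nat (aff_dim ?P) = Suc (Suc (Suc (nat (aff_dim ?P) - 3)))" by simp
      then show thesis by (rule c3)
    qed
  qed
  then show ?thesis
  proof cases
    case 1
    then have a1: "aff_dim ?P \<le> 1" by linarith
    have cov: "\<And>K. K face_of ?P \<Longrightarrow> {charvec (Bs ! j)} \<subset> K \<Longrightarrow> K \<subseteq> ?P \<Longrightarrow> K = ?P"
      by (rule cov_dim[OF face_of_refl[OF cvx] a1])
    have "card (Bs ! j - Bs ! i) = 1"
      by (rule edge[OF m face_of_refl[OF cvx] Bj Bi ij' charvec_in_P[OF Bj] charvec_in_P[OF Bi] cov])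
    then show ?thesis using ij by blast
  next
    case 2
    then have a2: "aff_dim ?P = 2" by linarith
    have "dual_shelling (Suc (Suc 0)) ?P {} ?L" using ds unfolding 2 numeral_2_eq_2 .
    then have "dual_facet_list ?P {} ?L \<and> (\<forall>j. 0 < j \<and> j < length ?L \<longrightarrow>
         (\<exists>i<j. \<exists>V. dual_vertex ?P V \<and> V \<in> dual_below ?P (?L ! j) \<and> V \<in> dual_below ?P (?L ! i)))"
      unfolding dual_shelling.simps(3) .
    note A = conjunct2[OF this]
    have jlt: "0 < j \<and> j < length ?L" using ij by simp
    have "\<exists>i<j. \<exists>V. dual_vertex ?P V \<and> V \<in> dual_below ?P (?L ! j) \<and> V \<in> dual_below ?P (?L ! i)"
      by (rule mp[OF spec[OF A, of j] jlt])
    then obtain i' V where iV: "i' < j" "dual_vertex ?P V" "V \<in> dual_below ?P (?L ! j)"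
      "V \<in> dual_below ?P (?L ! i')"
      by blast
    have i'l: "i' < length Bs" using iV(1) ij by linarith
    have Bi': "Bs ! i' \<in> matroid_bases indep" by (rule bas[OF i'l])
    have V: "V face_of ?P" "aff_dim V = 1" using iV(2) a2 unfolding dual_vertex_def by simp_all
    have vjV: "charvec (Bs ! j) \<in> V" using iV(3) unfolding dual_below_def Lk[OF ij(2)] by simp
    have vi'V: "charvec (Bs ! i') \<in> V" using iV(4) unfolding dual_below_def Lk[OF i'l] by simp
    show ?thesis
    proof (cases "H = ?P")
      case True
      have "charvec (Bs ! i') \<in> H" using charvec_in_P[OF Bi'] True by simp
      then have sub: "Bs ! i \<inter> Bs ! j \<subseteq> Bs ! i'"
        using FT_mem[OF Bi', of "Bs ! i \<inter> Bs ! j"] unfolding H_def by simp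
      have cov: "\<And>K. K face_of ?P \<Longrightarrow> {charvec (Bs ! j)} \<subset> K \<Longrightarrow> K \<subseteq> V \<Longrightarrow> K = V"
        by (rule cov_dim[OF V(1)]) (simp_all add: V(2))
      have ne: "Bs ! j \<noteq> Bs ! i'" using neq[of j i'] iV(1) ij by simp
      have "card (Bs ! j - Bs ! i') = 1"
        by (rule edge[OF m V(1) Bj Bi' ne vjV vi'V cov])
      then show ?thesis using iV(1) sub by blast
    next
      case False
      have "aff_dim H < 2" using face_of_aff_dim_lt[OF cvx Hf False] a2 by simp
      then have aH: "aff_dim H \<le> 1" by simp
      have cov: "\<And>K. K face_of ?P \<Longrightarrow> {charvec (Bs ! j)} \<subset> K \<Longrightarrow> K \<subseteq> H \<Longrightarrow> K = H"
        by (rule cov_dim[OF Hf aH])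
      have "card (Bs ! j - Bs ! i) = 1"
        by (rule edge[OF m Hf Bj Bi ij' vjH viH cov])
      then show ?thesis using ij by blast
    qed
  next
    case 3
    have "dual_shelling (Suc (Suc (Suc n))) ?P {} ?L" using ds unfolding 3 .
    then have "dual_facet_list ?P {} ?L \<and>
      (\<forall>j. 0 < j \<and> j < length ?L \<longrightarrow>
         (\<exists>L' r. dual_shelling (Suc (Suc n)) ?P (?L ! j) L' \<and> 1 \<le> r \<and> r \<le> length L' \<and>
            dual_below ?P (?L ! j) \<inter> (\<Union>i<j. dual_below ?P (?L ! i)) =
            (\<Union>k<r. dual_below ?P (L' ! k))))"
      unfolding dual_shelling.simps(4) .
    note A = conjunct2[OF this]
    have jlt: "0 < j \<and> j < length ?L" using ij by simp
    have "\<exists>L' r. dual_shelling (Suc (Suc n)) ?P (?L ! j) L' \<and> 1 \<le> r \<and> r \<le> length L' \<and>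
            dual_below ?P (?L ! j) \<inter> (\<Union>i<j. dual_below ?P (?L ! i)) =
            (\<Union>k<r. dual_below ?P (L' ! k))"
      by (rule mp[OF spec[OF A, of j] jlt])
    then obtain L' r where Lr: "dual_shelling (Suc (Suc n)) ?P (?L ! j) L'" "1 \<le> r" "r \<le> length L'"
      "dual_below ?P (?L ! j) \<inter> (\<Union>i<j. dual_below ?P (?L ! i)) = (\<Union>k<r. dual_below ?P (L' ! k))"
      by blast
    have Lj: "?L ! j = {charvec (Bs ! j)}" by (rule Lk[OF ij(2)])
    have Li: "?L ! i = {charvec (Bs ! i)}" using Lk ij by simp
    have H1: "H \<in> dual_below ?P (?L ! j)" unfolding dual_below_def Lj using Hf vjH by simp
    have H2: "H \<in> dual_below ?P (?L ! i)" unfolding dual_below_def Li using Hf viH by simp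
    have "H \<in> dual_below ?P (?L ! j) \<inter> (\<Union>i<j. dual_below ?P (?L ! i))"
      using H1 H2 ij(1) by blast
    then have "H \<in> (\<Union>k<r. dual_below ?P (L' ! k))" unfolding Lr(4) .
    then obtain k where k: "k < r" "H \<in> dual_below ?P (L' ! k)" by blast
    have kL: "L' ! k \<in> set L'" using k Lr(3) by simp
    have Ef: "L' ! k \<in> dual_facets ?P {charvec (Bs ! j)}"
      using ds_list[OF Lr(1)] kL unfolding dual_facet_list_def Lj by simp
    then have Ef': "L' ! k face_of ?P" "{charvec (Bs ! j)} \<subset> L' ! k"
      "\<And>K. K face_of ?P \<Longrightarrow> {charvec (Bs ! j)} \<subset> K \<Longrightarrow> K \<subset> L' ! k \<Longrightarrow> False"
      unfolding dual_facets_def by blast+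
    have "L' ! k \<in> dual_below ?P (L' ! k)" using Ef'(1) unfolding dual_below_def by simp
    then have "L' ! k \<in> (\<Union>k<r. dual_below ?P (L' ! k))" using k(1) by blast
    then have "L' ! k \<in> dual_below ?P (?L ! j) \<inter> (\<Union>i<j. dual_below ?P (?L ! i))" unfolding Lr(4) .
    then obtain m' where m': "m' < j" "L' ! k \<in> dual_below ?P (?L ! m')" by blast
    have m'l: "m' < length Bs" using m'(1) ij by linarith
    have Bm: "Bs ! m' \<in> matroid_bases indep" by (rule bas[OF m'l])
    have vmE: "charvec (Bs ! m') \<in> L' ! k" using m'(2) unfolding dual_below_def Lk[OF m'l] by simp
    have EH: "L' ! k \<subseteq> H" using k(2) unfolding dual_below_def by simp
    have "charvec (Bs ! m') \<in> H" using EH vmE by blast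
    then have sub: "Bs ! i \<inter> Bs ! j \<subseteq> Bs ! m'"
      using FT_mem[OF Bm, of "Bs ! i \<inter> Bs ! j"] unfolding H_def by simp
    have cov: "\<And>K. K face_of ?P \<Longrightarrow> {charvec (Bs ! j)} \<subset> K \<Longrightarrow> K \<subseteq> L' ! k \<Longrightarrow> K = L' ! k"
      using Ef'(3) by blast
    have ne: "Bs ! j \<noteq> Bs ! m'" using neq[of j m'] m'(1) ij by simp
    have vjE: "charvec (Bs ! j) \<in> L' ! k" using Ef'(2) by blast
    have "card (Bs ! j - Bs ! m') = 1"
      by (rule edge[OF m Ef'(1) Bj Bm ne vjE vmE cov])
    then show ?thesis using m'(1) sub by blast
  qed
qed

theorem theorem1p1:
  fixes indep :: "'e::finite set \<Rightarrow> bool" and Bs :: "'e set list"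
  assumes "matroid indep"
    and "distinct Bs" and "set Bs = matroid_bases indep"
    and "dual_shelling (nat (aff_dim (matroid_polytope indep))) (matroid_polytope indep) {}
           (map (\<lambda>B. {charvec B}) Bs)"
  shows "simplicial_shelling (indep_complex indep) Bs"
proof -
  note m = assms(1)
  obtain B0 where B0: "B0 \<in> matroid_bases indep" using bases_exist[OF m] by blast
  define r where "r = card B0"
  have cardB: "card B = r" if "B \<in> matroid_bases indep" for B
    unfolding r_def using bases_card[OF m that B0] .
  have bas: "Bs ! k \<in> matroid_bases indep" if "k < length Bs" for k
    using assms(3) nth_mem[OF that] by blast
  have neq: "Bs ! k \<noteq> Bs ! l" if "k < length Bs" "l < length Bs" "k \<noteq> l" for k l
    using assms(2) that nth_eq_iff_index_eq by blast
  have facets: "simplicial_facets (indep_complex indep) = matroid_bases indep"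
    unfolding simplicial_facets_def indep_complex_def matroid_bases_def by blast
  have Mx: "Max (card ` indep_complex indep) = r"
  proof (rule Max_eqI)
    show "finite (card ` indep_complex indep)" by simp
    show "\<And>y. y \<in> card ` indep_complex indep \<Longrightarrow> y \<le> r"
      unfolding indep_complex_def r_def using indep_card_le[OF m B0] by blast
    show "r \<in> card ` indep_complex indep"
      unfolding indep_complex_def r_def using basis_indep[OF B0] by blast
  qed
  have take_mem: "(F \<in> set (take j Bs)) = (\<exists>i<j. i < length Bs \<and> F = Bs ! i)" if "j \<le> length Bs" for F j
    using that by (auto simp: in_set_conv_nth min_def)
  have pure: "pure_card (complex_generated (set (take j Bs)) \<inter> complex_generated {Bs ! j}) (r - 1)"
    if j: "0 < j" "j < length Bs" for j
    unfolding pure_card_def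
  proof (intro conjI ballI)
    fix S assume S: "S \<in> complex_generated (set (take j Bs)) \<inter> complex_generated {Bs ! j}"
    then obtain i where i: "i < j" "S \<subseteq> Bs ! i" "S \<subseteq> Bs ! j"
      unfolding complex_generated_def using take_mem[of j] j by auto
    have Bi: "Bs ! i \<in> matroid_bases indep" using bas i j by simp
    have Bj: "Bs ! j \<in> matroid_bases indep" using bas j by simp
    have nij: "Bs ! j \<noteq> Bs ! i" using neq i j by simp
    {
      have "card (Bs ! j - Bs ! i) \<ge> 1"
        using card_diff_pos[OF bases_card[OF m Bj Bi] nij] .
      moreover have "card (Bs ! j) = card (Bs ! j - Bs ! i) + card (Bs ! i \<inter> Bs ! j)"
        by (metis Int_commute card_Diff_subset_Int card_Int_Diff finite add.commute)
      ultimately have "card (Bs ! i \<inter> Bs ! j) \<le> r - 1" using cardB[OF Bj] by linarith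
      moreover have "card S \<le> card (Bs ! i \<inter> Bs ! j)" using i by (intro card_mono) auto
      ultimately show "card S \<le> r - 1" by linarith
    }
    obtain mm where mm: "mm < j" "Bs ! i \<inter> Bs ! j \<subseteq> Bs ! mm" "card (Bs ! j - Bs ! mm) = 1"
      using key[OF m assms(2) assms(3) assms(4) i(1) j(2)] by blast
    define T where "T = Bs ! j \<inter> Bs ! mm"
    have "card (Bs ! j) = card (Bs ! j - Bs ! mm) + card T"
      unfolding T_def by (metis card_Int_Diff finite add.commute)
    then have cT: "card T = r - 1" using mm(3) cardB[OF Bj] by linarith
    have "Bs ! mm \<in> set (take j Bs)" using take_mem[of j "Bs ! mm"] j mm(1) by auto
    then have "T \<in> complex_generated (set (take j Bs))"
      unfolding complex_generated_def T_def by blast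
    moreover have "T \<in> complex_generated {Bs ! j}" unfolding complex_generated_def T_def by auto
    moreover have "S \<subseteq> T" using i mm(2) unfolding T_def by blast
    ultimately show "\<exists>T\<in>complex_generated (set (take j Bs)) \<inter> complex_generated {Bs ! j}. S \<subseteq> T \<and> card T = r - 1"
      using cT by blast
  qed
  show ?thesis
    unfolding simplicial_shelling_def facets Mx using assms(2,3) pure by blast
qed

end
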